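(* ${\bf KT^\boxdot}$ is sound and strongly complete with respect to the class of reflexive bimodal frames (both $R_1$ and $R_2$ reflexive), and also with respect to the class of bimodal frames $\langle S,R_1,R_2\rangle$ in which at least one of $R_1,R_2$ is reflexive.
   Context: Fix a nonempty set $\mathbf{P}$ of propositional variables. A bimodal model is $\langle S,R_1,R_2,V\rangle$ with $S$ nonempty, $R_1,R_2\subseteq S\times S$, $V:\mathbf{P}\to\mathcal{P}(S)$. $\mathcal{L}(\boxdot):\ \phi::=p\mid\neg\phi\mid(\phi\wedge\phi)\mid\boxdot\phi$. Truth: $\mathcal{M},s\vDash\boxdot\phi$ iff for all $t,u$ with $sR_1t$ and $sR_2u$, ($\mathcal{M},t\vDash\phi\iff\mathcal{M},u\vDash\phi$); atoms and Booleans as usual. ${\bf K^\boxdot}$ has axioms: all instances of propositional tautologies; $\boxdot\top$; $\boxdot\phi\leftrightarrow\boxdot\neg\phi$; $\boxdot\phi\wedge\boxdot\psi\to\boxdot(\phi\wedge\psi)$; $\boxdot\phi\to\boxdot(\phi\vee\psi)\vee\boxdot(\neg\phi\vee\chi)$; and rules: modus ponens and RE: from $\phi\leftrightarrow\psi$ infer $\boxdot\phi\leftrightarrow\boxdot\psi$. ${\bf KT^\boxdot}$ is ${\bf K^\boxdot}$ plus the axiom schema $\phi\to[\boxdot\phi\to(\boxdot(\phi\to\psi)\to\boxdot\psi)]$. Sound and strongly complete w.r.t. a class $\mathbb{C}$ of frames means: $\Gamma\vdash\phi$ iff $\phi$ is true at every state of every model based on a frame in $\mathbb{C}$ at which all of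 $\Gamma$ is true. *)

theory Defs
  imports Main
begin

datatype 'p fm = Atom 'p | Neg "'p fm" | Conj "'p fm" "'p fm" | Dot "'p fm"

definition Disj :: "'p fm \<Rightarrow> 'p fm \<Rightarrow> 'p fm" where
  "Disj a b = Neg (Conj (Neg a) (Neg b))"
definition Imp :: "'p fm \<Rightarrow> 'p fm \<Rightarrow> 'p fm" where
  "Imp a b = Neg (Conj a (Neg b))"
definition Iff :: "'p fm \<Rightarrow> 'p fm \<Rightarrow> 'p fm" where
  "Iff a b = Conj (Imp a b) (Imp b a)"
text \<open>Top as p or not p for a fixed atom (the set of atoms, a type, is nonempty).\<close>
definition Top :: "'p fm" where
  "Top = Neg (Conj (Atom undefined) (Neg (Atom undefined)))"

text \<open>Propositional evaluation: atoms and Dot-formulas are treated as propositional letters.\<close>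
fun peval :: "('p fm \<Rightarrow> bool) \<Rightarrow> 'p fm \<Rightarrow> bool" where
  "peval f (Atom p) = f (Atom p)"
| "peval f (Neg a) = (\<not> peval f a)"
| "peval f (Conj a b) = (peval f a \<and> peval f b)"
| "peval f (Dot a) = f (Dot a)"

definition tautology :: "'p fm \<Rightarrow> bool" where
  "tautology \<phi> = (\<forall>f. peval f \<phi>)"

inductive KTdot :: "'p fm \<Rightarrow> bool" where
  taut: "tautology \<phi> \<Longrightarrow> KTdot \<phi>"
| dot_top: "KTdot (Dot Top)"
| dot_neg: "KTdot (Iff (Dot \<phi>) (Dot (Neg \<phi>)))"
| dot_conj: "KTdot (Imp (Conj (Dot \<phi>) (Dot \<psi>)) (Dot (Conj \<phi> \<psi>)))"
| dot_split: "KTdot (Imp (Dot \<phi>) (Disj (Dot (Disj \<phi> \<psi>)) (Dot (Disj (Neg \<phi>) \<chi>))))"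
| axT: "KTdot (Imp \<phi> (Imp (Dot \<phi>) (Imp (Dot (Imp \<phi> \<psi>)) (Dot \<psi>))))"
| mp: "KTdot (Imp \<phi> \<psi>) \<Longrightarrow> KTdot \<phi> \<Longrightarrow> KTdot \<psi>"
| re: "KTdot (Iff \<phi> \<psi>) \<Longrightarrow> KTdot (Iff (Dot \<phi>) (Dot \<psi>))"

fun conjs :: "'p fm list \<Rightarrow> 'p fm" where
  "conjs [] = Top"
| "conjs (x # xs) = Conj x (conjs xs)"

definition derives :: "'p fm set \<Rightarrow> 'p fm \<Rightarrow> bool" where
  "derives \<Gamma> \<phi> = (\<exists>L. set L \<subseteq> \<Gamma> \<and> KTdot (Imp (conjs L) \<phi>))"

definition is_model :: "'s set \<Rightarrow> ('s \<Rightarrow> 's \<Rightarrow> bool) \<Rightarrow> ('s \<Rightarrow> 's \<Rightarrow> bool) \<Rightarrow> ('p \<Rightarrow> 's set) \<Rightarrow> bool" where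
  "is_model S R1 R2 V = (S \<noteq> {} \<and> (\<forall>s t. R1 s t \<longrightarrow> s \<in> S \<and> t \<in> S)
      \<and> (\<forall>s t. R2 s t \<longrightarrow> s \<in> S \<and> t \<in> S) \<and> (\<forall>p. V p \<subseteq> S))"

fun sat :: "('s \<Rightarrow> 's \<Rightarrow> bool) \<Rightarrow> ('s \<Rightarrow> 's \<Rightarrow> bool) \<Rightarrow> ('p \<Rightarrow> 's set) \<Rightarrow> 's \<Rightarrow> 'p fm \<Rightarrow> bool" where
  "sat R1 R2 V s (Atom p) = (s \<in> V p)"
| "sat R1 R2 V s (Neg a) = (\<not> sat R1 R2 V s a)"
| "sat R1 R2 V s (Conj a b) = (sat R1 R2 V s a \<and> sat R1 R2 V s b)"
| "sat R1 R2 V s (Dot a) = (\<forall>t u. R1 s t \<longrightarrow> R2 s u \<longrightarrow> (sat R1 R2 V t a \<longleftrightarrow> sat R1 R2 V u a))"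

definition refl_on_S :: "'s set \<Rightarrow> ('s \<Rightarrow> 's \<Rightarrow> bool) \<Rightarrow> bool" where
  "refl_on_S S R = (\<forall>s\<in>S. R s s)"

definition both_refl :: "'s set \<Rightarrow> ('s \<Rightarrow> 's \<Rightarrow> bool) \<Rightarrow> ('s \<Rightarrow> 's \<Rightarrow> bool) \<Rightarrow> bool" where
  "both_refl S R1 R2 = (refl_on_S S R1 \<and> refl_on_S S R2)"

definition one_refl :: "'s set \<Rightarrow> ('s \<Rightarrow> 's \<Rightarrow> bool) \<Rightarrow> ('s \<Rightarrow> 's \<Rightarrow> bool) \<Rightarrow> bool" where
  "one_refl S R1 R2 = (refl_on_S S R1 \<or> refl_on_S S R2)"

definition conseq :: "('s set \<Rightarrow> ('s \<Rightarrow> 's \<Rightarrow> bool) \<Rightarrow> ('s \<Rightarrow> 's \<Rightarrow> bool) \<Rightarrow> bool) \<Rightarrow> 'p fm set \<Rightarrow> 'p fm \<Rightarrow> bool" where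
  "conseq C \<Gamma> \<phi> = (\<forall>S R1 R2 V. is_model S R1 R2 V \<and> C S R1 R2 \<longrightarrow>
      (\<forall>s\<in>S. (\<forall>\<gamma>\<in>\<Gamma>. sat R1 R2 V s \<gamma>) \<longrightarrow> sat R1 R2 V s \<phi>))"

end

theory Submission
  imports Defs
begin

section \<open>Soundness\<close>

lemma sat_peval: "sat R1 R2 V s \<phi> = peval (\<lambda>x. sat R1 R2 V s x) \<phi>"
  by (induction \<phi>) auto

lemma sat_Top[simp]: "sat R1 R2 V s Top"
  by (simp add: Top_def)

lemma sat_conjs: "sat R1 R2 V s (conjs L) = (\<forall>x\<in>set L. sat R1 R2 V s x)"
  by (induction L) auto

lemma sat_Imp: "sat R1 R2 V s (Imp a b) = (sat R1 R2 V s a \<longrightarrow> sat R1 R2 V s b)"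
  by (simp add: Imp_def)

lemma sound_KT:
  assumes M: "is_model S R1 R2 V" and C: "one_refl S R1 R2"
  shows "KTdot \<phi> \<Longrightarrow> \<forall>s\<in>S. sat R1 R2 V s \<phi>"
proof (induction rule: KTdot.induct)
  case (taut \<phi>)
  then show ?case by (metis sat_peval tautology_def)
next
  case dot_top
  then show ?case by simp
next
  case (dot_neg \<phi>)
  then show ?case by (auto simp: Iff_def Imp_def)
next
  case (dot_conj \<phi> \<psi>)
  then show ?case by (auto simp: Iff_def Imp_def)
next
  case (dot_split \<phi> \<psi> \<chi>)
  show ?case
  proof
    fix s assume "s \<in> S"
    let ?f = "sat R1 R2 V"
    show "?f s (Imp (Dot \<phi>) (Disj (Dot (Disj \<phi> \<psi>)) (Dot (Disj (Neg \<phi>) \<chi>))))"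
    proof (cases "(\<exists>t. R1 s t) \<and> (\<exists>u. R2 s u)")
      case False then show ?thesis by (auto simp: Disj_def Imp_def)
    next
      case True
      then obtain t0 u0 where tu: "R1 s t0" "R2 s u0" by blast
      show ?thesis
      proof (cases "?f t0 \<phi>")
        case True
        have "?f s (Dot \<phi>) \<Longrightarrow> ?f s (Dot (Disj \<phi> \<psi>))"
        proof -
          assume d: "?f s (Dot \<phi>)"
          have a: "\<And>u. R2 s u \<Longrightarrow> ?f u \<phi>" using d tu True by auto
          have b: "\<And>t. R1 s t \<Longrightarrow> ?f t \<phi>" using d tu a by fastforce
          show ?thesis using a b by (auto simp: Disj_def)
        qed
        then show ?thesis by (auto simp: Disj_def Imp_def)
      next
        case False
        have "?f s (Dot \<phi>) \<Longrightarrow> ?f s (Dot (Disj (Neg \<phi>) \<chi>))"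
        proof -
          assume d: "?f s (Dot \<phi>)"
          have a: "\<And>u. R2 s u \<Longrightarrow> \<not> ?f u \<phi>" using d tu False by auto
          have b: "\<And>t. R1 s t \<Longrightarrow> \<not> ?f t \<phi>" using d tu a by fastforce
          show ?thesis using a b by (auto simp: Disj_def)
        qed
        then show ?thesis by (auto simp: Disj_def Imp_def)
      qed
    qed
  qed
next
  case (axT \<phi> \<psi>)
  show ?case
  proof
    fix s assume s: "s \<in> S"
    show "sat R1 R2 V s (Imp \<phi> (Imp (Dot \<phi>) (Imp (Dot (Imp \<phi> \<psi>)) (Dot \<psi>))))"
    proof (cases "refl_on_S S R1")
      case True
      then have r: "R1 s s" using s by (simp add: refl_on_S_def)
      let ?f = "sat R1 R2 V"
      have "?f s \<phi> \<Longrightarrow> ?f s (Dot \<phi>) \<Longrightarrow> ?f s (Dot (Imp \<phi> \<psi>)) \<Longrightarrow> ?f s (Dot \<psi>)"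
      proof -
        assume h: "?f s \<phi>" "?f s (Dot \<phi>)" "?f s (Dot (Imp \<phi> \<psi>))"
        have a: "\<And>u. R2 s u \<Longrightarrow> ?f u \<phi>" using h r by auto
        have b: "\<And>t u. R1 s t \<Longrightarrow> R2 s u \<Longrightarrow> ?f t \<phi>" using h a by fastforce
        show ?thesis using h(3) a b by (auto simp add: Imp_def)
      qed
      then show ?thesis by (simp only: sat_Imp) blast
    next
      case False
      then have "refl_on_S S R2" using C by (simp add: one_refl_def)
      then have r: "R2 s s" using s by (simp add: refl_on_S_def)
      let ?f = "sat R1 R2 V"
      have "?f s \<phi> \<Longrightarrow> ?f s (Dot \<phi>) \<Longrightarrow> ?f s (Dot (Imp \<phi> \<psi>)) \<Longrightarrow> ?f s (Dot \<psi>)"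
      proof -
        assume h: "?f s \<phi>" "?f s (Dot \<phi>)" "?f s (Dot (Imp \<phi> \<psi>))"
        have a: "\<And>t. R1 s t \<Longrightarrow> ?f t \<phi>" using h r by auto
        have b: "\<And>t u. R1 s t \<Longrightarrow> R2 s u \<Longrightarrow> ?f u \<phi>" using h a by fastforce
        show ?thesis using h(3) a b by (auto simp add: Imp_def)
      qed
      then show ?thesis by (simp only: sat_Imp) blast
    qed
  qed
next
  case (mp \<phi> \<psi>)
  then show ?case by (simp add: Imp_def)
next
  case (re \<phi> \<psi>)
  have "\<And>t. t \<in> S \<Longrightarrow> sat R1 R2 V t \<phi> = sat R1 R2 V t \<psi>"
    using re.IH by (auto simp: Iff_def Imp_def)
  moreover have "\<And>s t. R1 s t \<Longrightarrow> t \<in> S" "\<And>s t. R2 s t \<Longrightarrow> t \<in> S"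
    using M by (auto simp: is_model_def)
  ultimately show ?case by (simp add: Iff_def Imp_def) (metis (no_types, lifting))
qed

lemma soundness:
  fixes \<Gamma> :: "'p fm set"
  assumes "derives \<Gamma> \<phi>"
  shows "conseq (one_refl :: 's set \<Rightarrow> _) \<Gamma> \<phi>"
  unfolding conseq_def
proof (intro allI impI ballI)
  fix S :: "'s set" and R1 R2 V s
  assume A: "is_model S R1 R2 V \<and> one_refl S R1 R2" and s: "s \<in> S"
    and G: "\<forall>\<gamma>\<in>\<Gamma>. sat R1 R2 V s \<gamma>"
  obtain L where L: "set L \<subseteq> \<Gamma>" "KTdot (Imp (conjs L) \<phi>)"
    using assms by (auto simp: derives_def)
  have "sat R1 R2 V s (Imp (conjs L) \<phi>)" using sound_KT[OF _ _ L(2)] A s by blast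
  moreover have "sat R1 R2 V s (conjs L)" using L(1) G by (auto simp: sat_conjs)
  ultimately show "sat R1 R2 V s \<phi>" by (simp add: Imp_def)
qed

lemma soundness_both:
  fixes \<Gamma> :: "'p fm set"
  assumes "derives \<Gamma> \<phi>"
  shows "conseq (both_refl :: 's set \<Rightarrow> _) \<Gamma> \<phi>"
  unfolding conseq_def
proof (intro allI impI)
  fix S :: "'s set" and R1 R2 and V :: "'p \<Rightarrow> 's set"
  assume "is_model S R1 R2 V \<and> both_refl S R1 R2"
  then have "is_model S R1 R2 V \<and> one_refl S R1 R2" by (simp add: both_refl_def one_refl_def)
  then show "\<forall>s\<in>S. (\<forall>\<gamma>\<in>\<Gamma>. sat R1 R2 V s \<gamma>) \<longrightarrow> sat R1 R2 V s \<phi>"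
    using soundness[OF assms, where 's='s] unfolding conseq_def by blast
qed

section \<open>Propositional reasoning\<close>

lemma peval_Top[simp]: "peval f Top"
  by (simp add: Top_def)

lemma peval_conjs: "peval f (conjs L) = (\<forall>x\<in>set L. peval f x)"
  by (induction L) auto

lemma KT_taut1:
  assumes "KTdot a" "\<And>f. peval f a \<Longrightarrow> peval f b"
  shows "KTdot b"
proof -
  have "KTdot (Imp a b)" by (rule taut) (use assms(2) in \<open>auto simp: tautology_def Imp_def\<close>)
  then show ?thesis using assms(1) by (rule mp)
qed

lemma KT_taut2:
  assumes "KTdot a" "KTdot b" "\<And>f. peval f a \<Longrightarrow> peval f b \<Longrightarrow> peval f c"
  shows "KTdot c"
proof -
  have "KTdot (Imp a (Imp b c))" by (rule taut) (use assms(3) in \<open>auto simp: tautology_def Imp_def\<close>)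
  then have "KTdot (Imp b c)" using assms(1) by (rule mp)
  then show ?thesis using assms(2) by (rule mp)
qed

lemma KT_taut0:
  assumes "\<And>f. peval f c"
  shows "KTdot c"
  by (rule taut) (use assms in \<open>auto simp: tautology_def\<close>)

definition consistent :: "'p fm set \<Rightarrow> bool" where
  "consistent G = (\<forall>L. set L \<subseteq> G \<longrightarrow> \<not> KTdot (Neg (conjs L)))"

definition mcs :: "'p fm set \<Rightarrow> bool" where
  "mcs G = (consistent G \<and> (\<forall>\<phi>. \<phi> \<in> G \<or> Neg \<phi> \<in> G))"

lemma remove_insert:
  assumes "set L \<subseteq> insert \<phi> G" "KTdot (Neg (conjs L))"
  shows "\<exists>L'. set L' \<subseteq> G \<and> KTdot (Imp (conjs L') (Neg \<phi>))"
proof (intro exI conjI)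
  let ?L' = "filter (\<lambda>x. x \<noteq> \<phi>) L"
  show "set ?L' \<subseteq> G" using assms(1) by auto
  show "KTdot (Imp (conjs ?L') (Neg \<phi>))"
    using assms(2) by (rule KT_taut1) (use assms(1) in \<open>auto simp: Imp_def peval_conjs\<close>)
qed

lemma mcs_deduct:
  assumes "mcs s" "set L \<subseteq> s" "KTdot (Imp (conjs L) \<phi>)"
  shows "\<phi> \<in> s"
proof (rule ccontr)
  assume "\<phi> \<notin> s"
  then have "Neg \<phi> \<in> s" using assms(1) by (auto simp: mcs_def)
  then have "set (Neg \<phi> # L) \<subseteq> s" using assms(2) by auto
  moreover have "KTdot (Neg (conjs (Neg \<phi> # L)))"
    using assms(3) by (rule KT_taut1) (auto simp: Imp_def peval_conjs)
  moreover have "\<forall>L. set L \<subseteq> s \<longrightarrow> \<not> KTdot (Neg (conjs L))"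
    using assms(1) by (simp add: mcs_def consistent_def)
  ultimately show False by blast
qed

lemma mcs_thm:
  assumes "mcs s" "KTdot \<phi>"
  shows "\<phi> \<in> s"
  using mcs_deduct[OF assms(1), of "[]"] assms(2)
  by (metis KT_taut1 Imp_def conjs.simps(1) empty_subsetI list.set(1) peval.simps(2,3) set_empty)

lemma mcs_mp:
  assumes "mcs s" "KTdot (Imp a b)" "a \<in> s"
  shows "b \<in> s"
proof -
  have "KTdot (Imp (conjs [a]) b)" using assms(2) by (rule KT_taut1) (auto simp: Imp_def)
  then show ?thesis using mcs_deduct[OF assms(1), of "[a]"] assms(3) by auto
qed

lemma mcs_neg: "mcs s \<Longrightarrow> (Neg a \<in> s) = (a \<notin> s)"
proof
  assume m: "mcs s" and n: "Neg a \<in> s"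
  show "a \<notin> s"
  proof
    assume "a \<in> s"
    then have "set [a, Neg a] \<subseteq> s" using n by auto
    moreover have "KTdot (Neg (conjs [a, Neg a]))" by (rule KT_taut0) auto
    moreover have "\<forall>L. set L \<subseteq> s \<longrightarrow> \<not> KTdot (Neg (conjs L))"
      using m by (simp add: mcs_def consistent_def)
    ultimately show False by blast
  qed
next
  assume "mcs s" "a \<notin> s" then show "Neg a \<in> s" by (auto simp: mcs_def)
qed

lemma mcs_conj: "mcs s \<Longrightarrow> (Conj a b \<in> s) = (a \<in> s \<and> b \<in> s)"
proof
  assume m: "mcs s" and c: "Conj a b \<in> s"
  have "KTdot (Imp (Conj a b) a)" "KTdot (Imp (Conj a b) b)"
    by (rule KT_taut0, auto simp: Imp_def)+
  then show "a \<in> s \<and> b \<in> s" using mcs_mp[OF m] c by blast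
next
  assume m: "mcs s" and ab: "a \<in> s \<and> b \<in> s"
  have "KTdot (Imp (conjs [a, b]) (Conj a b))" by (rule KT_taut0) (auto simp: Imp_def)
  then show "Conj a b \<in> s" using mcs_deduct[OF m, of "[a,b]"] ab by auto
qed

section \<open>Lindenbaum\<close>

lemma chain_list:
  assumes "C \<noteq> {}" "chain\<^sub>\<subseteq> C" "set L \<subseteq> \<Union>C"
  shows "\<exists>X\<in>C. set L \<subseteq> X"
  using assms(3)
proof (induction L)
  case Nil
  then show ?case using assms(1) by auto
next
  case (Cons x L)
  then obtain X where X: "X \<in> C" "set L \<subseteq> X" by auto
  obtain Y where Y: "Y \<in> C" "x \<in> Y" using Cons.prems by auto
  show ?case
  proof (cases "X \<subseteq> Y")
    case True then show ?thesis using X Y by auto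
  next
    case False then have "Y \<subseteq> X" using assms(2) X Y by (auto simp: chain_subset_def)
    then show ?thesis using X Y by auto
  qed
qed

lemma lindenbaum:
  assumes "consistent G"
  shows "\<exists>M. G \<subseteq> M \<and> mcs M"
proof -
  let ?A = "{X. G \<subseteq> X \<and> consistent X}"
  have "\<forall>C\<in>chains ?A. \<exists>U\<in>?A. \<forall>X\<in>C. X \<subseteq> U"
  proof
    fix C assume C: "C \<in> chains ?A"
    show "\<exists>U\<in>?A. \<forall>X\<in>C. X \<subseteq> U"
    proof (cases "C = {}")
      case True
      have "G \<in> ?A" using assms by simp
      moreover have "\<forall>X\<in>C. X \<subseteq> G" using True by simp
      ultimately show ?thesis by (rule bexI[rotated])
    next
      case False
      have "consistent (\<Union>C)"
        unfolding consistent_def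
      proof (intro allI impI)
        fix L assume "set L \<subseteq> \<Union>C"
        moreover have ch: "chain\<^sub>\<subseteq> C" using C by (simp add: chains_def)
        ultimately obtain X where "X \<in> C" "set L \<subseteq> X"
          using chain_list[OF False ch] by blast
        moreover have "C \<subseteq> ?A" using C by (simp add: chains_def)
        ultimately have "consistent X" "set L \<subseteq> X" by auto
        then show "\<not> KTdot (Neg (conjs L))" unfolding consistent_def by blast
      qed
      moreover have "C \<subseteq> ?A" using C by (simp add: chains_def)
      then have "G \<subseteq> \<Union>C" using False by blast
      ultimately have "\<Union>C \<in> ?A" by simp
      moreover have "\<forall>X\<in>C. X \<subseteq> \<Union>C" by blast
      ultimately show ?thesis by (rule bexI[rotated])
    qed
  qed
  then obtain M where M: "M \<in> ?A" "\<forall>X\<in>?A. M \<subseteq> X \<longrightarrow> X = M"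
    using Zorn_Lemma2[of ?A] by blast
  have "\<forall>\<phi>. \<phi> \<in> M \<or> Neg \<phi> \<in> M"
  proof (rule allI, rule ccontr)
    fix \<phi> assume "\<not> (\<phi> \<in> M \<or> Neg \<phi> \<in> M)"
    then have n: "\<phi> \<notin> M" "Neg \<phi> \<notin> M" by auto
    have "\<not> consistent (insert \<phi> M)"
    proof
      assume "consistent (insert \<phi> M)"
      then have "insert \<phi> M \<in> ?A" using M(1) by auto
      then have "insert \<phi> M = M" using M(2) by blast
      then show False using n by auto
    qed
    then obtain L1 where L1: "set L1 \<subseteq> insert \<phi> M" "KTdot (Neg (conjs L1))"
      by (auto simp: consistent_def)
    have "\<not> consistent (insert (Neg \<phi>) M)"
    proof
      assume "consistent (insert (Neg \<phi>) M)"
      then have "insert (Neg \<phi>) M \<in> ?A" using M(1) by auto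
      then have "insert (Neg \<phi>) M = M" using M(2) by blast
      then show False using n by auto
    qed
    then obtain L2 where L2: "set L2 \<subseteq> insert (Neg \<phi>) M" "KTdot (Neg (conjs L2))"
      by (auto simp: consistent_def)
    obtain A1 where A1: "set A1 \<subseteq> M" "KTdot (Imp (conjs A1) (Neg \<phi>))"
      using remove_insert[OF L1] by blast
    obtain A2 where A2: "set A2 \<subseteq> M" "KTdot (Imp (conjs A2) (Neg (Neg \<phi>)))"
      using remove_insert[OF L2] by blast
    have "KTdot (Neg (conjs (A1 @ A2)))"
      using A1(2) A2(2) by (rule KT_taut2) (auto simp: Imp_def peval_conjs)
    moreover have "set (A1 @ A2) \<subseteq> M" using A1 A2 by auto
    moreover have "\<forall>L. set L \<subseteq> M \<longrightarrow> \<not> KTdot (Neg (conjs L))"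
      using M(1) by (simp add: consistent_def)
    ultimately show False by blast
  qed
  moreover have "G \<subseteq> M" "consistent M" using M(1) by simp_all
  ultimately show ?thesis unfolding mcs_def by blast
qed

section \<open>Canonical model\<close>

definition CR :: "'p fm set \<Rightarrow> 'p fm set \<Rightarrow> bool" where
  "CR s t = (mcs s \<and> mcs t \<and> (\<forall>\<psi>. Dot \<psi> \<in> s \<and> \<psi> \<in> s \<longrightarrow> \<psi> \<in> t))"

definition CV :: "'p \<Rightarrow> 'p fm set set" where
  "CV p = {s. mcs s \<and> Atom p \<in> s}"

lemma conjs_box:
  assumes "mcs s" "set L \<subseteq> {\<psi>. Dot \<psi> \<in> s \<and> \<psi> \<in> s}"
  shows "conjs L \<in> s \<and> Dot (conjs L) \<in> s"
  using assms(2)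
proof (induction L)
  case Nil
  have "KTdot Top" by (rule KT_taut0) simp
  then show ?case using mcs_thm[OF assms(1)] dot_top by auto
next
  case (Cons x L)
  then have h: "conjs L \<in> s" "Dot (conjs L) \<in> s" "x \<in> s" "Dot x \<in> s" by auto
  have "Conj (Dot x) (Dot (conjs L)) \<in> s" using h mcs_conj[OF assms(1)] by auto
  then have "Dot (Conj x (conjs L)) \<in> s" using mcs_mp[OF assms(1) dot_conj] by blast
  then show ?case using h mcs_conj[OF assms(1)] by auto
qed

lemma witness:
  assumes m: "mcs s" and b: "b \<in> s" and nb: "Dot b \<notin> s"
  shows "\<exists>t. CR s t \<and> b \<notin> t"
proof -
  let ?B = "{\<psi>. Dot \<psi> \<in> s \<and> \<psi> \<in> s}"
  have "consistent (insert (Neg b) ?B)"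
    unfolding consistent_def
  proof (intro allI impI notI)
    fix L assume L: "set L \<subseteq> insert (Neg b) ?B" "KTdot (Neg (conjs L))"
    obtain A where A: "set A \<subseteq> ?B" "KTdot (Imp (conjs A) (Neg (Neg b)))"
      using remove_insert[OF L] by blast
    let ?c = "conjs A"
    have cb: "KTdot (Imp ?c b)" using A(2) by (rule KT_taut1) (auto simp: Imp_def)
    have c: "?c \<in> s" "Dot ?c \<in> s" using conjs_box[OF m A(1)] by auto
    have "KTdot (Iff (Imp ?c b) Top)" using cb by (rule KT_taut1) (auto simp: Imp_def Iff_def)
    then have "KTdot (Iff (Dot (Imp ?c b)) (Dot Top))" by (rule re)
    then have "KTdot (Imp (Dot Top) (Dot (Imp ?c b)))"
      by (rule KT_taut1) (auto simp: Imp_def Iff_def)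
    then have d: "Dot (Imp ?c b) \<in> s" using mcs_mp[OF m] mcs_thm[OF m dot_top] by blast
    have "Imp (Dot ?c) (Imp (Dot (Imp ?c b)) (Dot b)) \<in> s"
      using mcs_mp[OF m axT c(1)] .
    then have "Imp (Dot (Imp ?c b)) (Dot b) \<in> s"
      by (metis Imp_def c(2) m mcs_conj mcs_neg)
    then have "Dot b \<in> s" by (metis Imp_def d m mcs_conj mcs_neg)
    then show False using nb by simp
  qed
  then obtain t where t: "insert (Neg b) ?B \<subseteq> t" "mcs t" using lindenbaum by blast
  then have "CR s t" using m by (auto simp: CR_def)
  moreover have "b \<notin> t" using t mcs_neg by blast
  ultimately show ?thesis by blast
qed

lemma truth:
  "mcs s \<Longrightarrow> sat CR CR CV s \<phi> = (\<phi> \<in> s)"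
proof (induction \<phi> arbitrary: s)
  case (Atom p)
  then show ?case by (simp add: CV_def)
next
  case (Neg \<phi>)
  show ?case using Neg.IH[OF Neg.prems] mcs_neg[OF Neg.prems] by simp
next
  case (Conj \<phi>1 \<phi>2)
  show ?case using Conj.IH[OF Conj.prems] mcs_conj[OF Conj.prems] by simp
next
  case (Dot a)
  have IH: "\<And>t. CR s t \<Longrightarrow> sat CR CR CV t a = (a \<in> t)"
  proof -
    fix t assume "CR s t"
    then have "mcs t" unfolding CR_def by blast
    then show "sat CR CR CV t a = (a \<in> t)" by (rule Dot.IH)
  qed
  have refl: "CR s s" using Dot.prems by (simp add: CR_def)
  show ?case
  proof
    assume S: "sat CR CR CV s (Dot a)"
    show "Dot a \<in> s"
    proof (rule ccontr)
      assume nd: "Dot a \<notin> s"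
      show False
      proof (cases "a \<in> s")
        case True
        then obtain t where t: "CR s t" "a \<notin> t" using witness[OF Dot.prems True nd] by blast
        have "sat CR CR CV t a = sat CR CR CV s a"
          using S[unfolded sat.simps, rule_format, OF t(1) refl] .
        then show False using IH[OF t(1)] IH[OF refl] True t(2) by simp
      next
        case False
        then have na: "Neg a \<in> s" using mcs_neg[OF Dot.prems] by simp
        have "Dot (Neg a) \<notin> s"
        proof
          assume "Dot (Neg a) \<in> s"
          moreover have "KTdot (Imp (Dot (Neg a)) (Dot a))"
            using dot_neg[of a] by (rule KT_taut1) (auto simp: Iff_def Imp_def)
          ultimately show False using mcs_mp[OF Dot.prems] nd by blast
        qed
        then obtain t where t: "CR s t" "Neg a \<notin> t" using witness[OF Dot.prems na] by blast
        have "mcs t" using t(1) unfolding CR_def by blast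
        then have "a \<in> t" using mcs_neg t(2) by blast
        have "sat CR CR CV t a = sat CR CR CV s a"
          using S[unfolded sat.simps, rule_format, OF t(1) refl] .
        then show False using IH[OF t(1)] IH[OF refl] False \<open>a \<in> t\<close> by simp
      qed
    qed
  next
    assume d: "Dot a \<in> s"
    have nd: "Dot (Neg a) \<in> s"
    proof -
      have "KTdot (Imp (Dot a) (Dot (Neg a)))"
        using dot_neg[of a] by (rule KT_taut1) (auto simp: Iff_def Imp_def)
      then show ?thesis using mcs_mp[OF Dot.prems] d by blast
    qed
    have agree: "\<And>t. CR s t \<Longrightarrow> (a \<in> t) = (a \<in> s)"
    proof -
      fix t assume t: "CR s t"
      show "(a \<in> t) = (a \<in> s)"
      proof (cases "a \<in> s")
        case True
        then have "a \<in> t" using t d unfolding CR_def by blast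
        then show ?thesis using True by simp
      next
        case False
        then have "Neg a \<in> s" using mcs_neg[OF Dot.prems] by simp
        then have "Neg a \<in> t" using t nd unfolding CR_def by blast
        moreover have "mcs t" using t unfolding CR_def by blast
        ultimately show ?thesis using False mcs_neg by blast
      qed
    qed
    show "sat CR CR CV s (Dot a)"
    proof (simp only: sat.simps, intro allI impI)
      fix t u assume tu: "CR s t" "CR s u"
      show "sat CR CR CV t a = sat CR CR CV u a"
        using IH[OF tu(1)] IH[OF tu(2)] agree[OF tu(1)] agree[OF tu(2)] by simp
    qed
  qed
qed

lemma completeness:
  fixes \<Gamma> :: "'p fm set"
  assumes "conseq (both_refl :: 'p fm set set \<Rightarrow> _) \<Gamma> \<phi>"
  shows "derives \<Gamma> \<phi>"
proof (rule ccontr)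
  assume nd: "\<not> derives \<Gamma> \<phi>"
  have "consistent (insert (Neg \<phi>) \<Gamma>)"
    unfolding consistent_def
  proof (intro allI impI notI)
    fix L assume L: "set L \<subseteq> insert (Neg \<phi>) \<Gamma>" "KTdot (Neg (conjs L))"
    obtain A where A: "set A \<subseteq> \<Gamma>" "KTdot (Imp (conjs A) (Neg (Neg \<phi>)))"
      using remove_insert[OF L] by blast
    have "KTdot (Imp (conjs A) \<phi>)" using A(2) by (rule KT_taut1) (auto simp: Imp_def)
    then have "derives \<Gamma> \<phi>" unfolding derives_def using A(1) by blast
    then show False using nd by simp
  qed
  then obtain M where M: "insert (Neg \<phi>) \<Gamma> \<subseteq> M" "mcs M" using lindenbaum by blast
  let ?S = "{s. mcs s} :: 'p fm set set"
  have MS: "M \<in> ?S" using M(2) by simp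
  then have ne: "?S \<noteq> {}" by (metis empty_iff)
  have mod: "is_model ?S CR CR CV"
    unfolding is_model_def
  proof (intro conjI allI impI)
    show "?S \<noteq> {}" by (rule ne)
  next
    fix s t :: "'p fm set" assume "CR s t" then show "s \<in> ?S" "t \<in> ?S" by (simp_all add: CR_def)
  next
    fix s t :: "'p fm set" assume "CR s t" then show "s \<in> ?S" "t \<in> ?S" by (simp_all add: CR_def)
  next
    fix p :: 'p show "CV p \<subseteq> ?S" by (auto simp: CV_def)
  qed
  have br: "both_refl ?S CR CR" unfolding both_refl_def refl_on_S_def by (simp add: CR_def)
  have G: "\<forall>\<gamma>\<in>\<Gamma>. sat CR CR CV M \<gamma>"
  proof
    fix \<gamma> assume "\<gamma> \<in> \<Gamma>"
    then have "\<gamma> \<in> M" using M(1) by blast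
    then show "sat CR CR CV M \<gamma>" using truth[OF M(2)] by simp
  qed
  have mb: "is_model ?S CR CR CV \<and> both_refl ?S CR CR" using mod br by (rule conjI)
  have "sat CR CR CV M \<phi>"
    using assms[unfolded conseq_def, rule_format, OF mb MS G[rule_format]] .
  then have "\<phi> \<in> M" using truth[OF M(2)] by simp
  moreover have "Neg \<phi> \<in> M" using M(1) by blast
  ultimately show False using mcs_neg[OF M(2)] by simp
qed

lemma completeness_one:
  fixes \<Gamma> :: "'p fm set"
  assumes "conseq (one_refl :: 'p fm set set \<Rightarrow> _) \<Gamma> \<phi>"
  shows "derives \<Gamma> \<phi>"
proof (rule completeness)
  show "conseq (both_refl :: 'p fm set set \<Rightarrow> _) \<Gamma> \<phi>"
    unfolding conseq_def
  proof (intro allI impI)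
    fix S :: "'p fm set set" and R1 R2 and V :: "'p \<Rightarrow> 'p fm set set"
    assume "is_model S R1 R2 V \<and> both_refl S R1 R2"
    then have "is_model S R1 R2 V \<and> one_refl S R1 R2" by (simp add: both_refl_def one_refl_def)
    then show "\<forall>s\<in>S. (\<forall>\<gamma>\<in>\<Gamma>. sat R1 R2 V s \<gamma>) \<longrightarrow> sat R1 R2 V s \<phi>"
      using assms unfolding conseq_def by blast
  qed
qed

theorem mainTheorem12:
  fixes \<Gamma> :: "'p fm set" and \<phi> :: "'p fm"
  shows "(derives \<Gamma> \<phi> \<longrightarrow> conseq (both_refl :: 's set \<Rightarrow> _) \<Gamma> \<phi>)
       \<and> (derives \<Gamma> \<phi> \<longleftrightarrow> conseq (both_refl :: 'p fm set set \<Rightarrow> _) \<Gamma> \<phi>)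
       \<and> (derives \<Gamma> \<phi> \<longrightarrow> conseq (one_refl :: 's set \<Rightarrow> _) \<Gamma> \<phi>)
       \<and> (derives \<Gamma> \<phi> \<longleftrightarrow> conseq (one_refl :: 'p fm set set \<Rightarrow> _) \<Gamma> \<phi>)"
proof (intro conjI)
  show "derives \<Gamma> \<phi> \<longrightarrow> conseq (both_refl :: 's set \<Rightarrow> _) \<Gamma> \<phi>"
    using soundness_both by blast
  show "derives \<Gamma> \<phi> \<longleftrightarrow> conseq (both_refl :: 'p fm set set \<Rightarrow> _) \<Gamma> \<phi>"
    using soundness_both completeness by blast
  show "derives \<Gamma> \<phi> \<longrightarrow> conseq (one_refl :: 's set \<Rightarrow> _) \<Gamma> \<phi>"
    using soundness by blast
  show "derives \<Gamma> \<phi> \<longleftrightarrow> conseq (one_refl :: 'p fm set set \<Rightarrow> _) \<Gamma> \<phi>"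
    using soundness completeness_one by blast
qed

end
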